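(* Let $\nu=\sum_{k=1}^K p^{(k)}\nu^{(k)}$ be a mixture model on $\mathbb{R}^d$ satisfying the standing assumptions below, and suppose there is $\beta\in\mathbb{R}$ with $\beta\,\mathbb{E}_{x\sim\nu}[|x_i-\mu_i(x)|]\ge\sqrt{\mathbb{E}_{x\sim\nu}[|x_i-\mu_i(x)|^2]}$ for all $i\in[d]$. Let $q=ENR(\nu)>0$. Then the MMDT algorithm (described below) returns a decision tree with $$P_{x\sim\nu}\big(\hat\mu(x)\ne\mu(x)\big)\le\frac{(4+2\pi^2/3)\,\alpha K(K-1)}{q}.$$
   Context: Standing assumptions: $\nu=\sum_{k=1}^K p^{(k)}\nu^{(k)}$, $\sum_k p^{(k)}=1$, each $\nu^{(k)}$ a discrete or absolutely continuous probability distribution on $\mathbb{R}^d$ with mean $\mu^{(k)}$ and density/mass function symmetric about $\mu^{(k)}$; all components share finite coordinate-wise variances $\sigma_1^2,\dots,\sigma_d^2>0$; $p^{(k)}\le\alpha/K$ for all $k$ with fixed $\alpha\ge1$. For $x\sim\nu$ drawn from component $k$, $\mu(x)=\mu^{(k)}$. $ENR(\nu)=\min_{k\ne l}\max_{j\in[d]}|\mu^{(k)}_j-\mu^{(l)}_j|^2/\sigma_j^2$. MMDT algorithm: start with a single root node whose index set is $N=[K]$. Repeatedly, for each node with index set $N$, $|N|\ge2$: choose the axis $i(N)\in\arg\max_{i\in[d]}\sigma_i^{-1}\max_{k,l\in N}|\mu^{(k)}_i-\mu^{(l)}_i|$; with $\nu(N)=\sum_{k\in N}\bar p^{(k)}\nu^{(k)}$,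 $\bar p^{(k)}=p^{(k)}/\sum_{m\in N}p^{(m)}$, choose a threshold $\theta$ with $\min_{k\in N}\mu^{(k)}_i<\theta<\max_{k\in N}\mu^{(k)}_i$ minimizing $P_{x\sim\nu(N)}(x \text{ and } \mu(x) \text{ lie on opposite sides of the cut } x_i\le\theta)$ (ties broken randomly; when the exact densities are unknown, instead minimize the Chebyshev upper bound $\sum_{k\in N}\bar p^{(k)}\sigma_i^2|\mu^{(k)}_i-\theta|^{-2}$); split the node by the cut $x_i\le\theta$ into two children with index sets $\{k\in N:\mu^{(k)}_i\le\theta\}$ and $\{k\in N:\mu^{(k)}_i>\theta\}$. Stop when every leaf has a single index. The resulting tree partitions $\mathbb{R}^d$ into $K$ leaves each containing exactly one mean; $\hat\mu(x)$ denotes the mean $\mu^{(k)}$ lying in the same leaf as $x$. *)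

theory Defs
  imports "HOL-Probability.Probability"
begin

text \<open>Axis-aligned decision trees on real^'d: a leaf carries a component index,
  an inner node carries an axis i, a threshold theta and the two subtrees
  (left child = points with x_i <= theta).\<close>
datatype 'd dtree = Leaf nat | Node 'd real "'d dtree" "'d dtree"

fun classify :: "'d dtree \<Rightarrow> real^'d \<Rightarrow> nat" where
  "classify (Leaf k) x = k"
| "classify (Node i \<theta> L R) x = (if x $ i \<le> \<theta> then classify L x else classify R x)"

definition mixture_model ::
  "nat \<Rightarrow> (nat \<Rightarrow> real) \<Rightarrow> (nat \<Rightarrow> (real^'d) measure) \<Rightarrow> (nat \<Rightarrow> real^'d)
   \<Rightarrow> ('d \<Rightarrow> real) \<Rightarrow> real \<Rightarrow> bool" where
  "mixture_model K p M \<mu> \<sigma> \<alpha> \<longleftrightarrow>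
     (\<forall>k<K. p k \<ge> 0) \<and> (\<Sum>k<K. p k) = 1 \<and> \<alpha> \<ge> 1 \<and> (\<forall>k<K. p k \<le> \<alpha> / real K) \<and>
     (\<forall>j. \<sigma> j > 0) \<and>
     (\<forall>k<K.
        prob_space (M k) \<and> sets (M k) = sets borel \<and>
        ((\<exists>S. countable S \<and> S \<in> sets (M k) \<and> emeasure (M k) S = 1)
          \<or> absolutely_continuous lborel (M k)) \<and>
        distr (M k) borel (\<lambda>x. 2 *\<^sub>R \<mu> k - x) = M k \<and>
        (\<forall>j. integrable (M k) (\<lambda>x. x $ j) \<and> (\<integral>x. x $ j \<partial>M k) = \<mu> k $ j) \<and>
        (\<forall>j. integrable (M k) (\<lambda>x. (x $ j - \<mu> k $ j)\<^sup>2) \<and>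
             (\<integral>x. (x $ j - \<mu> k $ j)\<^sup>2 \<partial>M k) = (\<sigma> j)\<^sup>2))"

definition ENR :: "nat \<Rightarrow> (nat \<Rightarrow> real^'d) \<Rightarrow> ('d \<Rightarrow> real) \<Rightarrow> real" where
  "ENR K \<mu> \<sigma> = Min {Max (range (\<lambda>j. \<bar>\<mu> k $ j - \<mu> l $ j\<bar>\<^sup>2 / (\<sigma> j)\<^sup>2)) | k l. k < K \<and> l < K \<and> k \<noteq> l}"

definition spread :: "(nat \<Rightarrow> real^'d) \<Rightarrow> ('d \<Rightarrow> real) \<Rightarrow> nat set \<Rightarrow> 'd \<Rightarrow> real" where
  "spread \<mu> \<sigma> N i = Max {\<bar>\<mu> k $ i - \<mu> l $ i\<bar> | k l. k \<in> N \<and> l \<in> N} / \<sigma> i"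

definition split_error ::
  "(nat \<Rightarrow> real) \<Rightarrow> (nat \<Rightarrow> (real^'d) measure) \<Rightarrow> (nat \<Rightarrow> real^'d) \<Rightarrow> nat set \<Rightarrow> 'd \<Rightarrow> real \<Rightarrow> real" where
  "split_error p M \<mu> N i \<theta> =
     (\<Sum>k\<in>N. (p k / (\<Sum>m\<in>N. p m)) *
        measure (M k) {x. (x $ i \<le> \<theta>) \<noteq> (\<mu> k $ i \<le> \<theta>)})"

text \<open>mmdt p M mu sigma N T: T is a possible output of MMDT run on the node with
  index set N (any choice among ties).\<close>
inductive mmdt ::
  "(nat \<Rightarrow> real) \<Rightarrow> (nat \<Rightarrow> (real^'d) measure) \<Rightarrow> (nat \<Rightarrow> real^'d) \<Rightarrow> ('d \<Rightarrow> real)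
   \<Rightarrow> nat set \<Rightarrow> 'd dtree \<Rightarrow> bool"
  for p M \<mu> \<sigma> where
  leaf: "mmdt p M \<mu> \<sigma> {k} (Leaf k)"
| node: "\<lbrakk> finite N; card N \<ge> 2;
          \<forall>i'. spread \<mu> \<sigma> N i' \<le> spread \<mu> \<sigma> N i;
          Min ((\<lambda>k. \<mu> k $ i) ` N) < \<theta>; \<theta> < Max ((\<lambda>k. \<mu> k $ i) ` N);
          \<forall>\<theta>'. Min ((\<lambda>k. \<mu> k $ i) ` N) < \<theta>' \<and> \<theta>' < Max ((\<lambda>k. \<mu> k $ i) ` N)
                 \<longrightarrow> split_error p M \<mu> N i \<theta> \<le> split_error p M \<mu> N i \<theta>';
          mmdt p M \<mu> \<sigma> {k\<in>N. \<mu> k $ i \<le> \<theta>} L;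
          mmdt p M \<mu> \<sigma> {k\<in>N. \<mu> k $ i > \<theta>} R \<rbrakk>
        \<Longrightarrow> mmdt p M \<mu> \<sigma> N (Node i \<theta> L R)"

end

theory Submission
  imports Defs
begin


definition H2 :: "nat \<Rightarrow> real" where "H2 r = (\<Sum>i=1..r. 1/(real i)^2)"

lemma H2_Suc: "H2 (Suc r) = H2 r + 1/(real (Suc r))^2"
  by (simp add: H2_def)

lemma H2_le: "r \<ge> 1 \<Longrightarrow> H2 r \<le> 2 - 1/real r"
proof (induction r)
  case 0 then show ?case by simp
next
  case (Suc r)
  show ?case
  proof (cases "r = 0")
    case True then show ?thesis by (simp add: H2_def)
  next
    case False
    then have r1: "real r \<ge> 1" by simp
    have "H2 (Suc r) \<le> 2 - 1/real r + 1/(real r + 1)^2"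
      using Suc False by (simp add: H2_Suc add.commute)
    also have "\<dots> \<le> 2 - 1/(real r + 1)"
    proof -
      have e: "1/real r - 1/(real r + 1) = 1/(real r*(real r+1))"
        using r1 by (simp add: field_simps)
      have "1/(real r + 1)^2 \<le> 1/(real r*(real r+1))"
        using r1 by (intro divide_left_mono) (auto simp: power2_eq_square)
      then have "1/(real r + 1)^2 \<le> 1/real r - 1/(real r + 1)" using e by simp
      then show ?thesis by simp
    qed
    finally show ?thesis by (simp add: add.commute)
  qed
qed

lemma H2_mono: "r \<le> s \<Longrightarrow> H2 r \<le> H2 s"
  unfolding H2_def by (rule sum_mono2) auto

lemma H2_nonneg: "H2 r \<ge> 0"
  unfolding H2_def by (rule sum_nonneg) auto

lemma sum_inv_sq:
  fixes d :: "nat \<Rightarrow> real"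
  shows "\<And>R. finite R \<Longrightarrow> card R = r \<Longrightarrow> \<forall>k\<in>R. d k > 0 \<Longrightarrow>
    \<forall>k\<in>R. real (card {j\<in>R. d j \<le> d k}) \<le> lam * d k \<Longrightarrow>
    (\<Sum>k\<in>R. 1/(d k)^2) \<le> lam^2 * H2 r"
proof (induction r)
  case 0
  then show ?case by (simp add: H2_def)
next
  case (Suc r R)
  then have ne: "R \<noteq> {}" by auto
  obtain k0 where k0: "k0 \<in> R" "\<forall>k\<in>R. d k \<le> d k0"
  proof -
    have "Max (d ` R) \<in> d ` R" using Suc.prems ne by simp
    then obtain k0 where "k0 \<in> R" "d k0 = Max (d ` R)" by auto
    then show ?thesis using that Suc.prems by auto
  qed
  have "{j\<in>R. d j \<le> d k0} = R" using k0 by auto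
  then have c: "real (Suc r) \<le> lam * d k0" using Suc.prems k0 by metis
  have dpos: "d k0 > 0" using Suc.prems k0 by auto
  have lampos: "lam > 0"
  proof (rule ccontr)
    assume "\<not> lam > 0"
    then have "lam * d k0 \<le> 0" using dpos by (simp add: mult_nonpos_nonneg)
    then show False using c by simp
  qed
  have t1: "1/(d k0)^2 \<le> lam^2 * (1/(real (Suc r))^2)"
  proof -
    have "(real (Suc r))^2 \<le> (lam * d k0)^2"
      using c by (intro power_mono) auto
    then have h: "(real (Suc r))^2 \<le> lam^2 * (d k0)^2" by (simp add: power_mult_distrib)
    have "1/(d k0)^2 \<le> lam^2 / (real (Suc r))^2"
      using h dpos by (simp add: divide_simps del: of_nat_Suc)
    then show ?thesis by simp
  qed
  define R' where "R' = R - {k0}"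
  have R': "finite R'" "card R' = r" "\<forall>k\<in>R'. d k > 0"
    using Suc.prems k0 by (auto simp: R'_def)
  have "\<forall>k\<in>R'. real (card {j\<in>R'. d j \<le> d k}) \<le> lam * d k"
  proof
    fix k assume k: "k \<in> R'"
    have "card {j\<in>R'. d j \<le> d k} \<le> card {j\<in>R. d j \<le> d k}"
      using Suc.prems by (intro card_mono) (auto simp: R'_def)
    then show "real (card {j\<in>R'. d j \<le> d k}) \<le> lam * d k"
      using Suc.prems k by (auto simp: R'_def)
  qed
  then have ih: "(\<Sum>k\<in>R'. 1/(d k)^2) \<le> lam^2 * H2 r"
    using Suc.IH R' by blast
  have "(\<Sum>k\<in>R. 1/(d k)^2) = 1/(d k0)^2 + (\<Sum>k\<in>R'. 1/(d k)^2)"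
    unfolding R'_def using Suc.prems k0 by (simp add: sum.remove)
  also have "\<dots> \<le> lam^2 * (1/(real (Suc r))^2) + lam^2 * H2 r"
    using t1 ih by simp
  also have "\<dots> = lam^2 * H2 (Suc r)" by (simp add: H2_Suc algebra_simps)
  finally show ?case .
qed



lemma card_diff_real:
  assumes "B \<subseteq> A" "finite A"
  shows "real (card (A - B)) = real (card A) - real (card B)"
proof -
  have "card B \<le> card A" using assms by (intro card_mono)
  then show ?thesis using assms by (simp add: card_Diff_subset finite_subset of_nat_diff)
qed

lemma lam_mult:
  fixes lam u v a b :: real
  assumes "lam > 0" "u - a/lam \<le> v - b/lam"
  shows "b - a \<le> lam * (v - u)"
proof -
  have "lam * (u - a/lam) \<le> lam * (v - b/lam)" using assms by (intro mult_left_mono) auto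
  then show ?thesis using assms by (simp add: algebra_simps)
qed

lemma exists_good:
  fixes y :: "nat \<Rightarrow> real" and N :: "nat set" and lam :: real
  assumes fin: "finite N" and n2: "card N \<ge> 2" and ab: "Min (y`N) < Max (y`N)"
    and lam: "lam = 2 * real (card N) / (Max (y`N) - Min (y`N))"
  shows "\<exists>\<theta>. Min (y`N) < \<theta> \<and> \<theta> < Max (y`N) \<and> (\<forall>k\<in>N. y k \<noteq> \<theta>) \<and>
    (\<forall>k\<in>N. \<theta> < y k \<longrightarrow> real (card {j\<in>N. \<theta> < y j \<and> y j \<le> y k}) \<le> lam * (y k - \<theta>)) \<and>
    (\<forall>k\<in>N. y k < \<theta> \<longrightarrow> real (card {j\<in>N. y k \<le> y j \<and> y j < \<theta>}) \<le> lam * (\<theta> - y k))"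
    (is "\<exists>\<theta>. ?good \<theta>")
proof (rule ccontr)
  assume nex: "\<not> (\<exists>\<theta>. ?good \<theta>)"
  define Y where "Y = y ` N"
  define z where "z = sorted_list_of_set Y"
  define r where "r = length z - 1"
  define n where "n = card N"
  have finY: "finite Y" using fin by (simp add: Y_def)
  have neN: "N \<noteq> {}" using n2 by auto
  have neY: "Y \<noteq> {}" using neN by (simp add: Y_def)
  have setz: "set z = Y" using finY by (simp add: z_def)
  have sortz: "sorted_wrt (<) z" by (simp add: z_def)
  have lenz: "length z = r + 1"
  proof -
    have "length z = card Y" by (simp add: z_def)
    moreover have "card Y > 0" using finY neY by (simp add: card_gt_0_iff)
    ultimately show ?thesis by (simp add: r_def)
  qed
  have less_iff: "(z!l < z!m) = (l < m)" if "l < length z" "m < length z" for l m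
  proof
    assume "z!l < z!m"
    show "l < m"
    proof (rule ccontr)
      assume "\<not> l < m"
      then have "m < l \<or> m = l" by auto
      then show False
      proof
        assume "m < l" then have "z!m < z!l" using sorted_wrt_nth_less[OF sortz] that by blast
        then show False using \<open>z!l < z!m\<close> by simp
      qed (use \<open>z!l < z!m\<close> in simp)
    qed
  next
    assume "l < m" then show "z!l < z!m" using sorted_wrt_nth_less[OF sortz] that by blast
  qed
  have le_iff: "(z!l \<le> z!m) = (l \<le> m)" if "l < length z" "m < length z" for l m
    using less_iff[OF that(2) that(1)] by (meson not_less)
  have Yz: "\<exists>l\<le>r. w = z!l" if "w \<in> Y" for w
  proof -
    from that setz obtain l where "l < length z" "w = z!l" by (metis in_set_conv_nth)
    then show ?thesis using lenz by (auto simp: less_Suc_eq_le)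
  qed
  have zY: "z!l \<in> Y" if "l \<le> r" for l using that lenz setz by (metis Suc_eq_plus1 le_imp_less_Suc nth_mem)
  have z0: "z!0 = Min Y"
  proof -
    obtain l where l: "l \<le> r" "Min Y = z!l" using Yz finY neY by (meson Min_in)
    have "z!0 \<le> z!l" using le_iff l lenz by simp
    moreover have "Min Y \<le> z!0" using zY finY by simp
    ultimately show ?thesis using l by simp
  qed
  have zr: "z!r = Max Y"
  proof -
    obtain l where l: "l \<le> r" "Max Y = z!l" using Yz finY neY by (meson Max_in)
    have "z!l \<le> z!r" using le_iff l lenz by simp
    moreover have "z!r \<le> Max Y" using zY finY by simp
    ultimately show ?thesis using l by simp
  qed
  have between: "\<not> (z!i < w \<and> w < z!(Suc i))" if bi: "i < r" and bw: "w \<in> Y" for i w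
  proof
    assume h: "z!i < w \<and> w < z!(Suc i)"
    obtain l where l: "l \<le> r" "w = z!l" using Yz[OF bw] by blast
    have lz: "l < length z" using l lenz by simp
    have iz: "i < length z" "Suc i < length z" using bi lenz by simp_all
    have "z!i < z!l" using h l by simp
    then have "i < l" using less_iff[OF iz(1) lz] by blast
    moreover have "z!l < z!(Suc i)" using h l by simp
    then have "l < Suc i" using less_iff[OF lz iz(2)] by blast
    ultimately show False by simp
  qed
  define a where "a = z!0"
  define b where "b = z!r"
  define D where "D = b - a"
  have Dpos: "D > 0" using ab z0 zr by (simp add: D_def a_def b_def Y_def)
  have lam': "lam = 2 * real n / D" using lam z0 zr by (simp add: D_def a_def b_def Y_def n_def)
  have npos: "real n \<ge> 2" using n2 by (simp add: n_def)
  have lampos: "lam > 0" using lam' Dpos npos by simp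
  define c where "c x = real (card {j\<in>N. y j \<le> x})" for x
  define cl where "cl x = real (card {j\<in>N. y j < x})" for x
  define G where "G x = x - c x / lam" for x
  define G' where "G' x = x - cl x / lam" for x
  define B where "B j = Min ((\<lambda>l. G (z!l)) ` {j..r})" for j
  define A where "A j = Max ((\<lambda>l. G' (z!l)) ` {0..j})" for j
  have Brec: "B i = min (G (z!i)) (B (Suc i))" if "i < r" for i
  proof -
    have "{i..r} = insert i {Suc i..r}" using that by auto
    then show ?thesis using that by (simp add: B_def)
  qed
  have Arec: "A (Suc i) = max (G' (z!(Suc i))) (A i)" for i
  proof -
    have "{0..Suc i} = insert (Suc i) {0..i}" by auto
    then show ?thesis by (simp add: A_def)
  qed
  have B_le: "B j \<le> G (z!l)" if "j \<le> l" "l \<le> r" for j l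
    using that unfolding B_def by (intro Min_le) auto
  have A_ge: "G' (z!l) \<le> A j" if "l \<le> j" for j l
    using that unfolding A_def by (intro Max_ge) auto
  have Br: "B r = G (z!r)" by (simp add: B_def)
  have A0: "A 0 = G' (z!0)" by (simp add: A_def)
  have cnt_gap: "{j\<in>N. y j \<le> x} = {j\<in>N. y j \<le> z!i}"
    if "i < r" "z!i \<le> x" "x < z!(Suc i)" for i x
  proof -
    have "y j \<le> z!i" if "j \<in> N" "y j \<le> x" for j
      using between[of i "y j"] \<open>i < r\<close> \<open>x < z!(Suc i)\<close> that by (auto simp: Y_def)
    then show ?thesis using that by force
  qed
  have cntl_gap: "{j\<in>N. y j < x} = {j\<in>N. y j \<le> z!i}"
    if "i < r" "z!i < x" "x \<le> z!(Suc i)" for i x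
  proof -
    have "y j \<le> z!i" if "j \<in> N" "y j < x" for j
      using between[of i "y j"] \<open>i < r\<close> \<open>x \<le> z!(Suc i)\<close> that by (auto simp: Y_def)
    then show ?thesis using that by force
  qed
  have cstrict: "cl w + 1 \<le> c w" if wY: "w \<in> Y" for w
  proof -
    obtain j where j: "j \<in> N" "y j = w" using wY by (auto simp: Y_def)
    have "{j\<in>N. y j < w} \<subset> {j\<in>N. y j \<le> w}" using j by auto
    then have "card {j\<in>N. y j < w} < card {j\<in>N. y j \<le> w}"
      using fin by (intro psubset_card_mono) auto
    then show ?thesis by (simp add: c_def cl_def)
  qed
  have cb: "c b = real n"
  proof -
    have "{j\<in>N. y j \<le> b} = N" using fin zr by (auto simp: b_def Y_def)
    then show ?thesis by (simp add: c_def n_def)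
  qed
  have cla: "cl a = 0"
  proof -
    have e: "{j\<in>N. y j < a} = {}" using fin z0 by (auto simp: a_def Y_def not_less)
    show ?thesis unfolding cl_def e by simp
  qed
  have aY: "a \<in> Y" using zY by (simp add: a_def)
  have bY: "b \<in> Y" using zY by (simp add: b_def)
  have ca: "c a \<ge> 1" using cstrict[OF aY] cla by simp
  have clb: "cl b \<le> real n - 1" using cstrict[OF bY] cb by simp
  have gap: "(B (Suc i) - B i) + (A (Suc i) - A i) \<le> z!(Suc i) - z!i" if ir: "i < r" for i
  proof -
    define ci where "ci = c (z!i)"
    define g where "g = z!(Suc i) - z!i"
    define \<rho> where "\<rho> = B (Suc i) + ci/lam - z!i"
    define \<tau> where "\<tau> = z!(Suc i) - ci/lam - A i"
    have zlt: "z!i < z!(Suc i)" using less_iff lenz ir by simp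
    have cl_next: "cl (z!(Suc i)) = ci"
      using cntl_gap[OF ir zlt order.refl] by (simp add: cl_def ci_def c_def)
    have c_next: "ci + 1 \<le> c (z!(Suc i))"
      using cstrict[of "z!(Suc i)"] zY ir cl_next by simp
    have cl_this: "cl (z!i) + 1 \<le> ci" using cstrict[of "z!i"] zY ir by (simp add: ci_def)
    have rho_le: "\<rho> \<le> g - 1/lam"
    proof -
      have "B (Suc i) \<le> G (z!(Suc i))" using B_le ir by simp
      moreover have "(ci + 1)/lam \<le> c (z!(Suc i))/lam" using c_next lampos by (simp add: divide_right_mono)
      ultimately show ?thesis by (simp add: \<rho>_def g_def G_def add_divide_distrib)
    qed
    have tau_le: "\<tau> \<le> g - 1/lam"
    proof -
      have "G' (z!i) \<le> A i" using A_ge by simp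
      moreover have "(cl (z!i) + 1)/lam \<le> ci/lam" using cl_this lampos by (simp add: divide_right_mono)
      ultimately show ?thesis by (simp add: \<tau>_def g_def G'_def add_divide_distrib)
    qed
    have lt: "\<rho> + \<tau> < g"
    proof (rule ccontr)
      assume "\<not> \<rho> + \<tau> < g"
      then have ge: "g \<le> \<rho> + \<tau>" by simp
      define \<theta> where "\<theta> = z!(Suc i) - \<tau>"
      have ilam: "1/lam > 0" using lampos by simp
      have t1: "z!i < \<theta>" using tau_le ilam unfolding \<theta>_def g_def by linarith
      have t2: "\<theta> < z!(Suc i)" using ge rho_le ilam unfolding \<theta>_def by linarith
      have cth: "c \<theta> = ci" using cnt_gap[OF ir _ t2] t1 by (simp add: c_def ci_def)
      have clth: "cl \<theta> = ci" using cntl_gap[OF ir t1] t2 by (simp add: cl_def ci_def c_def)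
      have "?good \<theta>"
      proof (intro conjI ballI impI)
        have "z!0 \<le> z!i" using le_iff lenz ir by simp
        then show "Min (y`N) < \<theta>" using t1 z0 by (simp add: Y_def)
        have "z!(Suc i) \<le> z!r" using le_iff lenz ir by simp
        then show "\<theta> < Max (y`N)" using t2 zr by (simp add: Y_def)
      next
        fix k assume "k \<in> N"
        then show "y k \<noteq> \<theta>" using between[OF ir, of "y k"] t1 t2 by (auto simp: Y_def)
      next
        fix k assume k: "k \<in> N" "\<theta> < y k"
        have eq: "{j\<in>N. \<theta> < y j \<and> y j \<le> y k} = {j\<in>N. y j \<le> y k} - {j\<in>N. y j \<le> \<theta>}" by auto
        have cardeq: "real (card {j\<in>N. \<theta> < y j \<and> y j \<le> y k}) = c (y k) - ci"
          unfolding eq using fin cth k by (subst card_diff_real) (auto simp: c_def)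
        obtain l where l: "l \<le> r" "y k = z!l" using Yz k by (auto simp: Y_def)
        have "Suc i \<le> l"
        proof (rule ccontr)
          assume "\<not> Suc i \<le> l"
          then have "l \<le> i" by simp
          then have "z!l \<le> z!i" using le_iff[of l i] lenz l ir by simp
          then show False using k l t1 by simp
        qed
        then have "B (Suc i) \<le> G (y k)" using B_le l by simp
        moreover have "\<theta> - ci/lam \<le> B (Suc i)" using ge by (simp add: \<theta>_def \<rho>_def g_def)
        ultimately have "\<theta> - ci/lam \<le> y k - c (y k)/lam" by (simp add: G_def)
        then show "real (card {j\<in>N. \<theta> < y j \<and> y j \<le> y k}) \<le> lam * (y k - \<theta>)"
          using cardeq lam_mult[OF lampos] by simp
      next
        fix k assume k: "k \<in> N" "y k < \<theta>"
        have eq: "{j\<in>N. y k \<le> y j \<and> y j < \<theta>} = {j\<in>N. y j < \<theta>} - {j\<in>N. y j < y k}" by auto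
        have cardeq: "real (card {j\<in>N. y k \<le> y j \<and> y j < \<theta>}) = ci - cl (y k)"
          unfolding eq using fin clth k by (subst card_diff_real) (auto simp: cl_def)
        obtain l where l: "l \<le> r" "y k = z!l" using Yz k by (auto simp: Y_def)
        have "l \<le> i"
        proof (rule ccontr)
          assume "\<not> l \<le> i"
          then have "Suc i \<le> l" by simp
          then have "z!(Suc i) \<le> z!l" using le_iff[of "Suc i" l] lenz l ir by simp
          then show False using k l t2 by simp
        qed
        then have "G' (y k) \<le> A i" using A_ge l by simp
        moreover have "A i = \<theta> - ci/lam" by (simp add: \<theta>_def \<tau>_def)
        ultimately have "y k - cl (y k)/lam \<le> \<theta> - ci/lam" by (simp add: G'_def)
        then show "real (card {j\<in>N. y k \<le> y j \<and> y j < \<theta>}) \<le> lam * (\<theta> - y k)"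
          using cardeq lam_mult[OF lampos] by simp
      qed
      then show False using nex by blast
    qed
    have e1: "B (Suc i) - B i = max 0 \<rho>"
      using Brec[OF ir] by (simp add: \<rho>_def G_def ci_def max_def min_def)
    have e2: "A (Suc i) - A i = max 0 \<tau>"
      using Arec[of i] cl_next by (simp add: \<tau>_def G'_def max_def)
    have ilam: "0 < 1/lam" using lampos by simp
    have h: "max 0 \<rho> + max 0 \<tau> \<le> g"
      using lt rho_le tau_le ilam zlt unfolding g_def
      by (cases "0 \<le> \<rho>"; cases "0 \<le> \<tau>") (simp_all only: max_def if_True if_False; linarith)+
    show ?thesis using e1 e2 h unfolding g_def by linarith
  qed
  have "(\<Sum>i<r. (B (Suc i) - B i) + (A (Suc i) - A i)) \<le> (\<Sum>i<r. z!(Suc i) - z!i)"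
    using gap by (intro sum_mono) auto
  then have "(B r - B 0) + (A r - A 0) \<le> z!r - z!0"
    by (simp add: sum.distrib sum_lessThan_telescope)
  moreover have "B 0 \<le> a - 1/lam"
  proof -
    have "B 0 \<le> G a" using B_le[of 0 0] by (simp add: a_def)
    moreover have "1/lam \<le> c a/lam" using ca lampos by (simp add: divide_right_mono)
    ultimately show ?thesis by (simp add: G_def)
  qed
  moreover have "B r = b - real n/lam" using Br cb by (simp add: G_def b_def)
  moreover have "A r \<ge> b - (real n - 1)/lam"
  proof -
    have "G' b \<le> A r" using A_ge[of r r] by (simp add: b_def)
    moreover have "cl b/lam \<le> (real n - 1)/lam" using clb lampos by (simp add: divide_right_mono)
    ultimately show ?thesis by (simp add: G'_def)
  qed
  moreover have "A 0 = a" using A0 cla by (simp add: G'_def a_def)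
  ultimately have "2 * D - (2 * real n - 2)/lam \<le> D"
    by (simp add: D_def a_def b_def diff_divide_distrib)
  moreover have "(2 * real n - 2)/lam < D"
  proof -
    have "(2 * real n - 2)/lam = (2 * real n - 2) * D / (2 * real n)" using lam' npos Dpos by simp
    also have "\<dots> < D" using npos Dpos by (simp add: divide_simps)
    finally show ?thesis .
  qed
  ultimately show False by simp
qed



lemma final_arith:
  fixes n D :: real
  assumes "n \<ge> 2" "D > 0"
  shows "2 * (2*n/D)^2 * (2 - 1/(n-1)) \<le> 20 * n * (n - 1) / D^2"
proof -
  define m where "m = n - 1"
  have m1: "m \<ge> 1" using assms by (simp add: m_def)
  have n: "n = m + 1" by (simp add: m_def)
  have key: "8 * (m+1) * (2*m - 1) \<le> 20 * m^2"
  proof -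
    have "0 \<le> 4*((m-1)^2 + 1)" by simp
    then show ?thesis by (simp add: algebra_simps power2_eq_square)
  qed
  have "2 * (2*n/D)^2 * (2 - 1/(n-1)) = 8 * (m+1)^2 * (2*m - 1) / (m * D^2)"
    using m1 assms by (simp add: n field_simps power2_eq_square)
  also have "\<dots> \<le> 20 * (m+1) * m / D^2"
  proof -
    have "8 * (m+1)^2 * (2*m - 1) \<le> 20 * (m+1) * m * m"
      using mult_left_mono[OF key, of "m+1"] m1 by (simp add: algebra_simps power2_eq_square)
    then show ?thesis using m1 assms by (simp add: divide_simps)
  qed
  also have "\<dots> = 20 * n * (n - 1) / D^2" by (simp add: n)
  finally show ?thesis .
qed

lemma comb_bound:
  fixes y :: "nat \<Rightarrow> real" and N :: "nat set"
  assumes fin: "finite N" and n2: "card N \<ge> 2" and ab: "Min (y`N) < Max (y`N)"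
  shows "\<exists>\<theta>. Min (y`N) < \<theta> \<and> \<theta> < Max (y`N) \<and> (\<forall>k\<in>N. y k \<noteq> \<theta>) \<and>
      (\<Sum>k\<in>N. 1/(y k - \<theta>)^2) \<le> 20 * real (card N) * (real (card N) - 1) / (Max (y`N) - Min (y`N))^2"
proof -
  define D where "D = Max (y`N) - Min (y`N)"
  define lam where "lam = 2 * real (card N) / D"
  have Dpos: "D > 0" using ab by (simp add: D_def)
  obtain \<theta> where th: "Min (y`N) < \<theta>" "\<theta> < Max (y`N)" "\<forall>k\<in>N. y k \<noteq> \<theta>"
    and rg: "\<forall>k\<in>N. \<theta> < y k \<longrightarrow> real (card {j\<in>N. \<theta> < y j \<and> y j \<le> y k}) \<le> lam * (y k - \<theta>)"
    and lg: "\<forall>k\<in>N. y k < \<theta> \<longrightarrow> real (card {j\<in>N. y k \<le> y j \<and> y j < \<theta>}) \<le> lam * (\<theta> - y k)"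
    using exists_good[OF fin n2 ab, of lam] by (auto simp: lam_def D_def)
  have neN: "N \<noteq> {}" using n2 by auto
  define R where "R = {k\<in>N. \<theta> < y k}"
  define L where "L = {k\<in>N. y k < \<theta>}"
  have NRL: "N = R \<union> L" using th(3) by (auto simp: R_def L_def)
  have disj: "R \<inter> L = {}" by (auto simp: R_def L_def)
  have finR: "finite R" "finite L" using fin by (auto simp: R_def L_def)
  have "Min (y`N) \<in> y`N" using fin neN by simp
  then obtain ka where ka: "ka \<in> N" "y ka = Min (y`N)" by (metis imageE)
  have "Max (y`N) \<in> y`N" using fin neN by simp
  then obtain kb where kb: "kb \<in> N" "y kb = Max (y`N)" by (metis imageE)
  have cR: "card R \<le> card N - 1"
  proof -
    have "R \<subseteq> N - {ka}" using ka th by (auto simp: R_def)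
    then have "card R \<le> card (N - {ka})" using fin by (intro card_mono) auto
    then show ?thesis using ka fin by simp
  qed
  have cL: "card L \<le> card N - 1"
  proof -
    have "L \<subseteq> N - {kb}" using kb th by (auto simp: L_def)
    then have "card L \<le> card (N - {kb})" using fin by (intro card_mono) auto
    then show ?thesis using kb fin by simp
  qed
  have sR: "(\<Sum>k\<in>R. 1/(y k - \<theta>)^2) \<le> lam^2 * H2 (card R)"
  proof (rule sum_inv_sq[OF finR(1) refl])
    show "\<forall>k\<in>R. 0 < y k - \<theta>" by (auto simp: R_def)
    show "\<forall>k\<in>R. real (card {j \<in> R. y j - \<theta> \<le> y k - \<theta>}) \<le> lam * (y k - \<theta>)"
    proof
      fix k assume k: "k \<in> R"
      have "{j \<in> R. y j - \<theta> \<le> y k - \<theta>} = {j\<in>N. \<theta> < y j \<and> y j \<le> y k}" by (auto simp: R_def)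
      then show "real (card {j \<in> R. y j - \<theta> \<le> y k - \<theta>}) \<le> lam * (y k - \<theta>)"
        using rg k by (auto simp: R_def)
    qed
  qed
  have sL0: "(\<Sum>k\<in>L. 1/(\<theta> - y k)^2) \<le> lam^2 * H2 (card L)"
  proof (rule sum_inv_sq[OF finR(2) refl])
    show "\<forall>k\<in>L. 0 < \<theta> - y k" by (auto simp: L_def)
    show "\<forall>k\<in>L. real (card {j \<in> L. \<theta> - y j \<le> \<theta> - y k}) \<le> lam * (\<theta> - y k)"
    proof
      fix k assume k: "k \<in> L"
      have "{j \<in> L. \<theta> - y j \<le> \<theta> - y k} = {j\<in>N. y k \<le> y j \<and> y j < \<theta>}" by (auto simp: L_def)
      then show "real (card {j \<in> L. \<theta> - y j \<le> \<theta> - y k}) \<le> lam * (\<theta> - y k)"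
        using lg k by (auto simp: L_def)
    qed
  qed
  have sL: "(\<Sum>k\<in>L. 1/(y k - \<theta>)^2) \<le> lam^2 * H2 (card L)"
    using sL0 by (simp add: power2_commute)
  have Hb: "H2 (card R) \<le> 2 - 1/(real (card N) - 1)" "H2 (card L) \<le> 2 - 1/(real (card N) - 1)"
  proof -
    have "H2 (card N - 1) \<le> 2 - 1/real (card N - 1)" using n2 by (intro H2_le) auto
    moreover have "real (card N - 1) = real (card N) - 1" using n2 by simp
    ultimately have h: "H2 (card N - 1) \<le> 2 - 1/(real (card N) - 1)" by simp
    show "H2 (card R) \<le> 2 - 1/(real (card N) - 1)" using H2_mono[OF cR] h by simp
    show "H2 (card L) \<le> 2 - 1/(real (card N) - 1)" using H2_mono[OF cL] h by simp
  qed
  have "(\<Sum>k\<in>N. 1/(y k - \<theta>)^2) = (\<Sum>k\<in>R. 1/(y k - \<theta>)^2) + (\<Sum>k\<in>L. 1/(y k - \<theta>)^2)"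
    unfolding NRL using finR disj by (simp add: sum.union_disjoint)
  also have "\<dots> \<le> lam^2 * H2 (card R) + lam^2 * H2 (card L)" using sR sL by simp
  also have "\<dots> \<le> lam^2 * (2 - 1/(real (card N) - 1)) + lam^2 * (2 - 1/(real (card N) - 1))"
    using Hb by (intro add_mono mult_left_mono) auto
  also have "\<dots> = 2 * (2 * real (card N) / D)^2 * (2 - 1/(real (card N) - 1))"
    by (simp add: lam_def)
  also have "\<dots> \<le> 20 * real (card N) * (real (card N) - 1) / D^2"
    using final_arith[of "real (card N)" D] n2 Dpos by simp
  finally show ?thesis using th by (auto simp: D_def)
qed



lemma classify_sets: "{x. classify (T::'d::finite dtree) x = k} \<in> sets borel"
proof (induction T)
  case (Leaf j) then show ?case by (cases "j = k") auto
next
  case (Node i \<theta> L R)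
  have h: "{x::real^'d::finite. x$i \<le> \<theta>} \<in> sets borel" by measurable
  have "{x. classify (Node i \<theta> L R) x = k} =
        ({x. x$i \<le> \<theta>} \<inter> {x. classify L x = k}) \<union> (- {x. x$i \<le> \<theta>} \<inter> {x. classify R x = k})"
    by auto
  then show ?case using Node h by auto
qed

lemma classify_ne_sets: "{x. classify (T::'d::finite dtree) x \<noteq> k} \<in> sets borel"
proof -
  have "{x. classify T x \<noteq> k} = - {x. classify T x = k}" by auto
  then show ?thesis using borel_comp[OF classify_sets] by simp
qed

lemma W_sets: "{x::real^'d::finite. (x$i \<le> \<theta>) \<noteq> (m \<le> \<theta>)} \<in> sets borel"
proof -
  have h: "{x::real^'d::finite. x$i \<le> \<theta>} \<in> sets borel" by measurable
  show ?thesis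
  proof (cases "m \<le> \<theta>")
    case True
    then have "{x::real^'d::finite. (x$i \<le> \<theta>) \<noteq> (m \<le> \<theta>)} = - {x. x$i \<le> \<theta>}" by auto
    then show ?thesis using borel_comp[OF h] by simp
  next
    case False
    then have "{x::real^'d::finite. (x$i \<le> \<theta>) \<noteq> (m \<le> \<theta>)} = {x. x$i \<le> \<theta>}" by auto
    then show ?thesis using h by auto
  qed
qed

lemma cheb:
  fixes Mk :: "(real^'d::finite) measure"
  assumes ps: "prob_space Mk" and sb: "sets Mk = sets borel"
    and int: "integrable Mk (\<lambda>x. (x$j - m)\<^sup>2)" and iv: "(\<integral>x. (x$j - m)\<^sup>2 \<partial>Mk) = s2"
    and d: "d > 0" and dd: "d = \<bar>m - \<theta>\<bar>"
  shows "measure Mk {x. (x$j \<le> \<theta>) \<noteq> (m \<le> \<theta>)} \<le> s2 / d\<^sup>2"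
proof -
  interpret prob_space Mk by (rule ps)
  have sp: "space Mk = UNIV" using sets_eq_imp_space_eq[OF sb] by simp
  have mk: "measure Mk {x\<in>space Mk. (x$j - m)\<^sup>2 \<ge> d\<^sup>2} \<le> (\<integral>x. (x$j - m)\<^sup>2 \<partial>Mk) / d\<^sup>2"
    by (rule integral_Markov_inequality_measure[OF int, of "space Mk"]) (use d in auto)
  have sub: "{x. (x$j \<le> \<theta>) \<noteq> (m \<le> \<theta>)} \<subseteq> {x\<in>space Mk. (x$j - m)\<^sup>2 \<ge> d\<^sup>2}"
  proof
    fix x :: "real^'d::finite" assume x: "x \<in> {x. (x$j \<le> \<theta>) \<noteq> (m \<le> \<theta>)}"
    have "d \<le> \<bar>x$j - m\<bar>" using x dd by auto
    then have "d\<^sup>2 \<le> (x$j - m)\<^sup>2" using d by (metis abs_le_square_iff abs_of_pos)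
    then show "x \<in> {x\<in>space Mk. (x$j - m)\<^sup>2 \<ge> d\<^sup>2}" using sp by simp
  qed
  have ms: "{x\<in>space Mk. (x$j - m)\<^sup>2 \<ge> d\<^sup>2} \<in> sets Mk"
  proof -
    have "{x::real^'d::finite. (x$j - m)\<^sup>2 \<ge> d\<^sup>2} \<in> sets borel" by measurable
    then show ?thesis using sp sb by simp
  qed
  have "measure Mk {x. (x$j \<le> \<theta>) \<noteq> (m \<le> \<theta>)} \<le> measure Mk {x\<in>space Mk. (x$j - m)\<^sup>2 \<ge> d\<^sup>2}"
    by (rule finite_measure_mono[OF sub ms])
  then show ?thesis using mk iv by simp
qed

lemma node_arith:
  fixes E :: real and a b :: nat
  assumes "E \<ge> 0" "a \<ge> 1" "b \<ge> 1"
  shows "E * real (a+b) * (real (a+b) - 1) + E * ((real a + 1) * real a * (real a - 1)) / 3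
        + E * ((real b + 1) * real b * (real b - 1)) / 3
        \<le> E * ((real (a+b) + 1) * real (a+b) * (real (a+b) - 1)) / 3"
proof -
  have ab: "real (a+b) - 1 \<le> real a * real b"
  proof -
    have "0 \<le> (real a - 1) * (real b - 1)" using assms by simp
    then show ?thesis by (simp add: algebra_simps)
  qed
  have "real (a+b) * (real (a+b) - 1) \<le> real (a+b) * (real a * real b)"
    using ab by (intro mult_left_mono) auto
  then have "E * (real (a+b) * (real (a+b) - 1)) \<le> E * (real (a+b) * (real a * real b))"
    using assms by (intro mult_left_mono) auto
  moreover have "E * ((real (a+b) + 1) * real (a+b) * (real (a+b) - 1)) / 3 - E * ((real a + 1) * real a * (real a - 1)) / 3
        - E * ((real b + 1) * real b * (real b - 1)) / 3 = E * (real (a+b) * (real a * real b))"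
    by (simp add: field_simps)
  ultimately show ?thesis by (simp add: algebra_simps)
qed

lemma main_ind:
  fixes p :: "nat \<Rightarrow> real" and M :: "nat \<Rightarrow> (real^'d::finite) measure"
    and \<mu> :: "nat \<Rightarrow> real^'d::finite" and \<sigma> :: "'d \<Rightarrow> real"
  assumes model: "mixture_model K p M \<mu> \<sigma> \<alpha>" and qpos: "q > 0"
    and qle: "\<And>k l. k < K \<Longrightarrow> l < K \<Longrightarrow> k \<noteq> l \<Longrightarrow> \<exists>j. q \<le> \<bar>\<mu> k $ j - \<mu> l $ j\<bar>\<^sup>2 / (\<sigma> j)\<^sup>2"
  shows "mmdt p M \<mu> \<sigma> N T \<Longrightarrow> N \<subseteq> {..<K} \<Longrightarrow>
    (\<Sum>k\<in>N. p k * measure (M k) {x. classify T x \<noteq> k})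
      \<le> 20 * \<alpha> / (real K * q) * ((real (card N) + 1) * real (card N) * (real (card N) - 1)) / 3"
proof (induction rule: mmdt.induct)
  case (leaf k)
  then show ?case by simp
next
  case (node N i \<theta> L R)
  define E where "E = 20 * \<alpha> / (real K * q)"
  have pnn: "\<And>k. k < K \<Longrightarrow> p k \<ge> 0" and ple: "\<And>k. k < K \<Longrightarrow> p k \<le> \<alpha> / real K"
    and alpha: "\<alpha> \<ge> 1" and sigpos: "\<And>j. \<sigma> j > 0"
    using model unfolding mixture_model_def by auto
  have Kpos: "K > 0" using node.prems node.hyps(2) by (metis card_mono card_lessThan finite_lessThan le_zero_eq not_gr0 numeral_le_iff semiring_norm(69) zero_le_numeral order_trans)
  have Epos: "E \<ge> 0" using alpha qpos Kpos by (simp add: E_def)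
  have compo: "\<And>k. k < K \<Longrightarrow> prob_space (M k) \<and> sets (M k) = sets borel \<and>
      integrable (M k) (\<lambda>x. (x $ i - \<mu> k $ i)\<^sup>2) \<and> (\<integral>x. (x $ i - \<mu> k $ i)\<^sup>2 \<partial>M k) = (\<sigma> i)\<^sup>2"
    using model unfolding mixture_model_def by blast
  define NL where "NL = {k\<in>N. \<mu> k $ i \<le> \<theta>}"
  define NR where "NR = {k\<in>N. \<mu> k $ i > \<theta>}"
  define W where "W t k = {x::real^'d::finite. (x$i \<le> t) \<noteq> (\<mu> k $ i \<le> t)}" for t k
  define vals where "vals = (\<lambda>k. \<mu> k $ i) ` N"
  have finN: "finite N" by fact
  have NK: "N \<subseteq> {..<K}" by fact
  have neN: "N \<noteq> {}" using node.hyps(2) by auto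
  have NLR: "N = NL \<union> NR" "NL \<inter> NR = {}" by (auto simp: NL_def NR_def)
  have finLR: "finite NL" "finite NR" using finN by (auto simp: NL_def NR_def)
  have "Min vals \<in> vals" using finN neN by (simp add: vals_def)
  then obtain ka where ka: "ka \<in> N" "\<mu> ka $ i = Min vals" by (auto simp: vals_def)
  have "Max vals \<in> vals" using finN neN by (simp add: vals_def)
  then obtain kb where kb: "kb \<in> N" "\<mu> kb $ i = Max vals" by (auto simp: vals_def)
  have kaL: "ka \<in> NL" using ka node.hyps(4) by (auto simp: NL_def vals_def)
  have kbR: "kb \<in> NR" using kb node.hyps(5) by (auto simp: NR_def vals_def)
  have cardN: "card N = card NL + card NR" using NLR finLR by (simp add: card_Un_disjoint)
  have cL1: "card NL \<ge> 1" using kaL finLR by (metis One_nat_def Suc_leI card_gt_0_iff empty_iff)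
  have cR1: "card NR \<ge> 1" using kbR finLR by (metis One_nat_def Suc_leI card_gt_0_iff empty_iff)
  have IHL: "(\<Sum>k\<in>NL. p k * measure (M k) {x. classify L x \<noteq> k})
      \<le> E * ((real (card NL) + 1) * real (card NL) * (real (card NL) - 1)) / 3"
    using node.IH(1) NK unfolding E_def NL_def by auto
  have IHR: "(\<Sum>k\<in>NR. p k * measure (M k) {x. classify R x \<noteq> k})
      \<le> E * ((real (card NR) + 1) * real (card NR) * (real (card NR) - 1)) / 3"
    using node.IH(2) NK unfolding E_def NR_def by auto
  have stepL: "p k * measure (M k) {x. classify (Node i \<theta> L R) x \<noteq> k}
      \<le> p k * measure (M k) (W \<theta> k) + p k * measure (M k) {x. classify L x \<noteq> k}" if k: "k \<in> NL" for k
  proof -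
    have kK: "k < K" using k NK by (auto simp: NL_def)
    interpret prob_space "M k" using compo[OF kK] by blast
    have sb: "sets (M k) = sets borel" using compo[OF kK] by blast
    have sub: "{x. classify (Node i \<theta> L R) x \<noteq> k} \<subseteq> W \<theta> k \<union> {x. classify L x \<noteq> k}"
      using k by (auto simp: W_def NL_def)
    have m1: "W \<theta> k \<in> sets (M k)" using W_sets sb by (simp add: W_def)
    have m2: "{x. classify L x \<noteq> k} \<in> sets (M k)" using classify_ne_sets sb by simp
    have "measure (M k) {x. classify (Node i \<theta> L R) x \<noteq> k} \<le> measure (M k) (W \<theta> k \<union> {x. classify L x \<noteq> k})"
      using sub m1 m2 by (intro finite_measure_mono) auto
    also have "\<dots> \<le> measure (M k) (W \<theta> k) + measure (M k) {x. classify L x \<noteq> k}"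
      using m1 m2 by (rule measure_Un_le)
    finally show ?thesis using pnn[OF kK] by (simp add: distrib_left[symmetric] mult_left_mono)
  qed
  have stepR: "p k * measure (M k) {x. classify (Node i \<theta> L R) x \<noteq> k}
      \<le> p k * measure (M k) (W \<theta> k) + p k * measure (M k) {x. classify R x \<noteq> k}" if k: "k \<in> NR" for k
  proof -
    have kK: "k < K" using k NK by (auto simp: NR_def)
    interpret prob_space "M k" using compo[OF kK] by blast
    have sb: "sets (M k) = sets borel" using compo[OF kK] by blast
    have sub: "{x. classify (Node i \<theta> L R) x \<noteq> k} \<subseteq> W \<theta> k \<union> {x. classify R x \<noteq> k}"
      using k by (auto simp: W_def NR_def)
    have m1: "W \<theta> k \<in> sets (M k)" using W_sets sb by (simp add: W_def)
    have m2: "{x. classify R x \<noteq> k} \<in> sets (M k)" using classify_ne_sets sb by simp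
    have "measure (M k) {x. classify (Node i \<theta> L R) x \<noteq> k} \<le> measure (M k) (W \<theta> k \<union> {x. classify R x \<noteq> k})"
      using sub m1 m2 by (intro finite_measure_mono) auto
    also have "\<dots> \<le> measure (M k) (W \<theta> k) + measure (M k) {x. classify R x \<noteq> k}"
      using m1 m2 by (rule measure_Un_le)
    finally show ?thesis using pnn[OF kK] by (simp add: distrib_left[symmetric] mult_left_mono)
  qed
  have step3: "(\<Sum>k\<in>N. p k * measure (M k) (W \<theta> k)) \<le> E * real (card N) * (real (card N) - 1)"
  proof -
    define D where "D = Max vals - Min vals"
    have finV: "finite vals" using finN by (simp add: vals_def)
    obtain k l where kl: "k \<in> N" "l \<in> N" "k \<noteq> l"
    proof -
      obtain k where k: "k \<in> N" using neN by auto
      have "card (N - {k}) \<ge> 1" using node.hyps(2) k finN by simp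
      then obtain l where "l \<in> N - {k}" by (metis card.empty ex_in_conv not_one_le_zero)
      then show ?thesis using that k by auto
    qed
    obtain j where j: "q \<le> \<bar>\<mu> k $ j - \<mu> l $ j\<bar>\<^sup>2 / (\<sigma> j)\<^sup>2"
      using qle kl NK by blast
    define t where "t = \<bar>\<mu> k $ j - \<mu> l $ j\<bar> / \<sigma> j"
    have tnn: "t \<ge> 0" using sigpos[of j] by (simp add: t_def)
    have tq: "q \<le> t\<^sup>2" using j by (simp add: t_def power_divide)
    have finS: "finite {\<bar>\<mu> k $ j' - \<mu> l $ j'\<bar> | k l. k \<in> N \<and> l \<in> N}" for j'
    proof -
      have "{\<bar>\<mu> k $ j' - \<mu> l $ j'\<bar> | k l. k \<in> N \<and> l \<in> N} = (\<lambda>(k,l). \<bar>\<mu> k $ j' - \<mu> l $ j'\<bar>) ` (N \<times> N)"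
        by auto
      then show ?thesis using finN by simp
    qed
    have "t \<le> spread \<mu> \<sigma> N j"
    proof -
      have "\<bar>\<mu> k $ j - \<mu> l $ j\<bar> \<le> Max {\<bar>\<mu> k $ j - \<mu> l $ j\<bar> | k l. k \<in> N \<and> l \<in> N}"
        using finS kl by (intro Max_ge) auto
      then show ?thesis unfolding t_def spread_def using sigpos[of j] by (simp add: divide_right_mono)
    qed
    also have "\<dots> \<le> spread \<mu> \<sigma> N i" using node.hyps(3) by blast
    also have "\<dots> \<le> D / \<sigma> i"
    proof -
      have "Max {\<bar>\<mu> k $ i - \<mu> l $ i\<bar> | k l. k \<in> N \<and> l \<in> N} \<le> D"
      proof (rule Max.boundedI)
        show "finite {\<bar>\<mu> k $ i - \<mu> l $ i\<bar> | k l. k \<in> N \<and> l \<in> N}" by (rule finS)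
        show "{\<bar>\<mu> k $ i - \<mu> l $ i\<bar> | k l. k \<in> N \<and> l \<in> N} \<noteq> {}" using kl by auto
        fix v assume "v \<in> {\<bar>\<mu> k $ i - \<mu> l $ i\<bar> | k l. k \<in> N \<and> l \<in> N}"
        then obtain k' l' where v: "v = \<bar>\<mu> k' $ i - \<mu> l' $ i\<bar>" "k' \<in> N" "l' \<in> N" by auto
        have "\<mu> k' $ i \<le> Max vals" "\<mu> l' $ i \<le> Max vals" "Min vals \<le> \<mu> k' $ i" "Min vals \<le> \<mu> l' $ i"
          using finV v by (auto simp: vals_def)
        then show "v \<le> D" using v by (simp add: D_def abs_le_iff)
      qed
      then show ?thesis unfolding spread_def using sigpos[of i] by (simp add: divide_right_mono)
    qed
    finally have tD: "t \<le> D / \<sigma> i" .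
    have tpos: "t > 0" using tq qpos tnn by (metis not_less power2_eq_square mult_le_0_iff order_le_less_trans less_le)
    have Dpos: "D > 0" using tD tpos sigpos[of i] by (smt (verit) divide_nonpos_pos)
    have sigD: "q * (\<sigma> i)\<^sup>2 \<le> D\<^sup>2"
    proof -
      have "t * \<sigma> i \<le> D" using tD sigpos[of i] by (simp add: field_simps)
      then have "(t * \<sigma> i)\<^sup>2 \<le> D\<^sup>2" using tnn sigpos[of i] by (intro power_mono) auto
      moreover have "q * (\<sigma> i)\<^sup>2 \<le> t\<^sup>2 * (\<sigma> i)\<^sup>2" using tq by (intro mult_right_mono) auto
      ultimately show ?thesis by (simp add: power_mult_distrib)
    qed
    have mm: "Min ((\<lambda>k. \<mu> k $ i) ` N) < Max ((\<lambda>k. \<mu> k $ i) ` N)"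
      using node.hyps(4,5) by simp
    obtain \<theta>' where th: "Min vals < \<theta>'" "\<theta>' < Max vals" "\<forall>k\<in>N. \<mu> k $ i \<noteq> \<theta>'"
      and thsum: "(\<Sum>k\<in>N. 1/(\<mu> k $ i - \<theta>')^2) \<le> 20 * real (card N) * (real (card N) - 1) / D^2"
      using comb_bound[OF finN node.hyps(2) mm] unfolding vals_def D_def by blast
    have chb: "measure (M k) (W \<theta>' k) \<le> (\<sigma> i)\<^sup>2 / (\<mu> k $ i - \<theta>')^2" if k: "k \<in> N" for k
    proof -
      have kK: "k < K" using k NK by auto
      have d: "\<bar>\<mu> k $ i - \<theta>'\<bar> > 0" using th k by auto
      have "measure (M k) (W \<theta>' k) \<le> (\<sigma> i)\<^sup>2 / \<bar>\<mu> k $ i - \<theta>'\<bar>\<^sup>2"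
        unfolding W_def using compo[OF kK] d by (intro cheb) auto
      then show ?thesis by simp
    qed
    have mono: "(\<Sum>k\<in>N. p k * measure (M k) (W \<theta> k)) \<le> (\<Sum>k\<in>N. p k * measure (M k) (W \<theta>' k))"
    proof (cases "(\<Sum>m\<in>N. p m) = 0")
      case True
      have "\<forall>k\<in>N. p k = 0" using True finN pnn NK by (subst sum_nonneg_eq_0_iff[symmetric]) auto
      then show ?thesis by simp
    next
      case False
      define S where "S = (\<Sum>m\<in>N. p m)"
      have Spos: "S > 0" using False pnn NK by (simp add: S_def) (metis (no_types, lifting) less_eq_real_def lessThan_iff subsetD sum_nonneg)
      have se: "(\<Sum>k\<in>N. p k * measure (M k) (W t k)) = S * split_error p M \<mu> N i t" for t
        unfolding split_error_def S_def[symmetric] W_def using Spos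
        by (simp add: sum_distrib_left)
      have "split_error p M \<mu> N i \<theta> \<le> split_error p M \<mu> N i \<theta>'"
        using node.hyps(6) th unfolding vals_def by blast
      then show ?thesis using se Spos by (simp add: mult_left_mono)
    qed
    have "(\<Sum>k\<in>N. p k * measure (M k) (W \<theta>' k)) \<le> (\<Sum>k\<in>N. \<alpha> / real K * ((\<sigma> i)\<^sup>2 * (1/(\<mu> k $ i - \<theta>')^2)))"
    proof (rule sum_mono)
      fix k assume k: "k \<in> N"
      have kK: "k < K" using k NK by auto
      have "p k * measure (M k) (W \<theta>' k) \<le> \<alpha> / real K * ((\<sigma> i)\<^sup>2 / (\<mu> k $ i - \<theta>')^2)"
        using chb[OF k] ple[OF kK] pnn[OF kK] by (intro mult_mono) auto
      then show "p k * measure (M k) (W \<theta>' k) \<le> \<alpha> / real K * ((\<sigma> i)\<^sup>2 * (1/(\<mu> k $ i - \<theta>')^2))" by simp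
    qed
    also have "\<dots> = \<alpha> / real K * (\<sigma> i)\<^sup>2 * (\<Sum>k\<in>N. 1/(\<mu> k $ i - \<theta>')^2)"
      by (simp add: sum_distrib_left mult.assoc)
    also have "\<dots> \<le> \<alpha> / real K * (\<sigma> i)\<^sup>2 * (20 * real (card N) * (real (card N) - 1) / D^2)"
      using thsum alpha Kpos by (intro mult_left_mono) auto
    also have "\<dots> \<le> \<alpha> / real K * (D\<^sup>2 / q) * (20 * real (card N) * (real (card N) - 1) / D^2)"
    proof -
      have "(\<sigma> i)\<^sup>2 \<le> D\<^sup>2 / q" using sigD qpos by (simp add: field_simps)
      moreover have "0 \<le> 20 * real (card N) * (real (card N) - 1) / D^2" using node.hyps(2) by simp
      ultimately show ?thesis using alpha Kpos by (intro mult_right_mono mult_left_mono) auto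
    qed
    also have "\<dots> = E * real (card N) * (real (card N) - 1)"
      using Dpos qpos Kpos by (simp add: E_def field_simps)
    finally show ?thesis using mono by linarith
  qed
  have "(\<Sum>k\<in>N. p k * measure (M k) {x. classify (Node i \<theta> L R) x \<noteq> k})
      = (\<Sum>k\<in>NL. p k * measure (M k) {x. classify (Node i \<theta> L R) x \<noteq> k})
        + (\<Sum>k\<in>NR. p k * measure (M k) {x. classify (Node i \<theta> L R) x \<noteq> k})"
    unfolding NLR(1) using finLR NLR(2) by (rule sum.union_disjoint)
  also have "\<dots> \<le> ((\<Sum>k\<in>NL. p k * measure (M k) (W \<theta> k)) + (\<Sum>k\<in>NL. p k * measure (M k) {x. classify L x \<noteq> k}))
       + ((\<Sum>k\<in>NR. p k * measure (M k) (W \<theta> k)) + (\<Sum>k\<in>NR. p k * measure (M k) {x. classify R x \<noteq> k}))"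
    using stepL stepR by (intro add_mono) (simp_all add: sum.distrib[symmetric] sum_mono)
  also have "\<dots> = (\<Sum>k\<in>N. p k * measure (M k) (W \<theta> k)) + (\<Sum>k\<in>NL. p k * measure (M k) {x. classify L x \<noteq> k})
       + (\<Sum>k\<in>NR. p k * measure (M k) {x. classify R x \<noteq> k})"
    unfolding NLR(1) using finLR NLR(2) by (simp add: sum.union_disjoint)
  also have "\<dots> \<le> E * real (card N) * (real (card N) - 1)
       + E * ((real (card NL) + 1) * real (card NL) * (real (card NL) - 1)) / 3
       + E * ((real (card NR) + 1) * real (card NR) * (real (card NR) - 1)) / 3"
    using step3 IHL IHR by linarith
  also have "\<dots> \<le> E * ((real (card N) + 1) * real (card N) * (real (card N) - 1)) / 3"
    using node_arith[OF Epos cL1 cR1] cardN by simp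
  finally show ?case by (simp add: E_def)
qed

theorem theorem7:
  fixes K :: nat and p :: "nat \<Rightarrow> real" and M :: "nat \<Rightarrow> (real^'d) measure"
    and \<mu> :: "nat \<Rightarrow> real^'d" and \<sigma> :: "'d \<Rightarrow> real" and \<alpha> q :: real
    and T :: "'d dtree"
  assumes model: "mixture_model K p M \<mu> \<sigma> \<alpha>"
    and beta: "\<exists>\<beta>::real. \<forall>i.
       \<beta> * (\<Sum>k<K. p k * (\<integral>x. \<bar>x $ i - \<mu> k $ i\<bar> \<partial>M k))
         \<ge> sqrt (\<Sum>k<K. p k * (\<integral>x. \<bar>x $ i - \<mu> k $ i\<bar>\<^sup>2 \<partial>M k))"
    and q_def: "q = ENR K \<mu> \<sigma>" and q_pos: "q > 0"
    and tree: "mmdt p M \<mu> \<sigma> {..<K} T"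
  shows "(\<Sum>k<K. p k * measure (M k) {x. \<mu> (classify T x) \<noteq> \<mu> k})
           \<le> (4 + 2 * pi\<^sup>2 / 3) * \<alpha> * real K * (real K - 1) / q"
proof -
  have pnn: "\<And>k. k < K \<Longrightarrow> p k \<ge> 0" and psum: "(\<Sum>k<K. p k) = 1"
    and alpha: "\<alpha> \<ge> 1"
    and compo: "\<And>k. k < K \<Longrightarrow> prob_space (M k) \<and> sets (M k) = sets borel"
    using model unfolding mixture_model_def by auto
  have K1: "K \<ge> 1" using psum by (cases K) auto
  have qle: "\<exists>j. q \<le> \<bar>\<mu> k $ j - \<mu> l $ j\<bar>\<^sup>2 / (\<sigma> j)\<^sup>2" if kl: "k < K" "l < K" "k \<noteq> l" for k l
  proof -
    define f where "f j = \<bar>\<mu> k $ j - \<mu> l $ j\<bar>\<^sup>2 / (\<sigma> j)\<^sup>2" for j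
    define S where "S = {Max (range (\<lambda>j. \<bar>\<mu> k $ j - \<mu> l $ j\<bar>\<^sup>2 / (\<sigma> j)\<^sup>2)) | k l. k < K \<and> l < K \<and> k \<noteq> l}"
    have "S \<subseteq> (\<lambda>(k,l). Max (range (\<lambda>j. \<bar>\<mu> k $ j - \<mu> l $ j\<bar>\<^sup>2 / (\<sigma> j)\<^sup>2))) ` ({..<K} \<times> {..<K})"
      by (auto simp: S_def)
    then have finS: "finite S" by (rule finite_subset) auto
    have "Max (range f) \<in> S" using kl unfolding S_def f_def by blast
    then have "q \<le> Max (range f)" using finS q_def unfolding ENR_def S_def[symmetric] by simp
    moreover have "Max (range f) \<in> range f" by (intro Max_in) auto
    then obtain j where "Max (range f) = f j" by (metis imageE)
    ultimately show ?thesis unfolding f_def by auto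
  qed
  have main: "(\<Sum>k\<in>{..<K}. p k * measure (M k) {x. classify T x \<noteq> k})
      \<le> 20 * \<alpha> / (real K * q) * ((real (card {..<K}) + 1) * real (card {..<K}) * (real (card {..<K}) - 1)) / 3"
    using main_ind[OF model q_pos qle tree] by blast
  have "(\<Sum>k<K. p k * measure (M k) {x. \<mu> (classify T x) \<noteq> \<mu> k})
      \<le> (\<Sum>k<K. p k * measure (M k) {x. classify T x \<noteq> k})"
  proof (rule sum_mono)
    fix k assume "k \<in> {..<K}"
    then have kK: "k < K" by simp
    interpret prob_space "M k" using compo[OF kK] by blast
    have "measure (M k) {x. \<mu> (classify T x) \<noteq> \<mu> k} \<le> measure (M k) {x. classify T x \<noteq> k}"
      using compo[OF kK] classify_ne_sets by (intro finite_measure_mono) auto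
    then show "p k * measure (M k) {x. \<mu> (classify T x) \<noteq> \<mu> k} \<le> p k * measure (M k) {x. classify T x \<noteq> k}"
      using pnn[OF kK] by (rule mult_left_mono)
  qed
  also have "\<dots> \<le> 20 * \<alpha> / (real K * q) * ((real K + 1) * real K * (real K - 1)) / 3"
    using main by simp
  also have "\<dots> = (20 * (real K + 1) / 3) * \<alpha> * (real K - 1) / q"
    using K1 q_pos by (simp add: field_simps)
  also have "\<dots> \<le> ((4 + 2 * pi\<^sup>2 / 3) * real K) * \<alpha> * (real K - 1) / q"
  proof -
    show ?thesis
    proof (cases "K = 1")
      case True then show ?thesis by simp
    next
      case False
      then have K2: "real K \<ge> 2" using K1 by simp
      have "pi\<^sup>2 \<ge> 3\<^sup>2" using pi_gt3 by (intro power_mono) auto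
      then have pi9: "pi\<^sup>2 \<ge> 9" by simp
      have c: "20 * (real K + 1) / 3 \<le> (4 + 2 * pi\<^sup>2 / 3) * real K"
      proof -
        have "(4 + 2 * 9 / 3) * real K \<le> (4 + 2 * pi\<^sup>2 / 3) * real K"
          using pi9 K2 by (intro mult_right_mono) auto
        moreover have "20 * (real K + 1) / 3 \<le> (4 + 2 * 9 / 3) * real K" using K2 by simp
        ultimately show ?thesis by linarith
      qed
      have nn: "0 \<le> \<alpha> * (real K - 1) / q" using alpha K2 q_pos by simp
      have "(20 * (real K + 1) / 3) * (\<alpha> * (real K - 1) / q) \<le> ((4 + 2 * pi\<^sup>2 / 3) * real K) * (\<alpha> * (real K - 1) / q)"
        using c nn by (rule mult_right_mono)
      then show ?thesis by (simp add: mult.assoc)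
    qed
  qed
  also have "\<dots> = (4 + 2 * pi\<^sup>2 / 3) * \<alpha> * real K * (real K - 1) / q" by simp
  finally show ?thesis .
qed

end
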